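(* Let $A$, $Q$ and $H\subseteq A^Q$ be non-empty finite sets and $\mathcal F$ a clone with carrier $A$ satisfying $\Delta^2$. Then $H\in\mathrm{Inv}_Q\mathcal F$ if and only if both of the following hold: (1) $H|_P\in\mathrm{Inv}_P\mathcal F$ for all $P\in[Q]^1\cup\{Q^{[B]}_H: B\in[A]^2\}$; (2) $H$ is decomposable over $[Q]^1\cup[Q]^{2,id}_H\cup\{Q^{[B]}_H:B\in[A]^2\}$.
   Context: $\mathcal O(A)=\bigcup_{n<\omega}A^{A^n}$; $\mathcal F_{[n]}=\mathcal F\cap A^{A^n}$. $A^2_2$ is the set of pairs $\mathbf a=a_0a_1\in A^2$ with $a_0\ne a_1$, $\mathrm{ran}\,\mathbf a=\{a_0,a_1\}$. A clone with carrier $A$ is a subset of $\mathcal O(A)$ containing all projections and closed under composition. For $f\in\mathcal O(A)_{[m]}$, $h_i\in A^Q$, $f(h_0,\dots,h_{m-1})$ is $q\mapsto f(h_0(q)\dots h_{m-1}(q))$; $\mathrm{Inv}_Q\mathcal F$ is the set of $H\subseteq A^Q$ closed under such compositions with $f\in\mathcal F$. $h|_P$ is the restriction of $h$ to $P\cap\mathrm{dom}\,h$, $H|_P=\{h|_P:h\in H\}$, $H(q)=\{h(q):h\in H\}$. For $R\subseteq Q$, $(H|_R)|^Q=\{f\in A^Q:f|_R\in H|_R\}$; $H$ is decomposable over $\mathscr R\subseteq\mathscr P(Q)$ if $H=\bigcap_{R\in\mathscr R}(H|_R)|^Q$. $[X]^k$ is the set of $k$-element subsets of $X$. $[Q]^{2,id}_H$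 is the set of $\{p,q\}\in[Q]^2$ with $h(p)=h(q)$ for all $h\in H$. For $B\subseteq A$, $Q^{[B]}_H=\{q\in Q: H(q)\subseteq B\}$. $\mathcal F$ satisfies $\Delta^2$ if for all $\mathbf a,\mathbf b\in A^2_2$ with $\mathrm{ran}\,\mathbf a\ne\mathrm{ran}\,\mathbf b$ and all $a\in\mathrm{ran}\,\mathbf a$, $b\in\mathrm{ran}\,\mathbf b$, there is $w\in\mathcal F_{[2]}$ with $w(\mathbf a)=a$, $w(\mathbf b)=b$ and $w(xx)=x$ for all $x\in A$. *)

theory Defs
  imports "HOL-Library.FuncSet"
begin

(* An n-ary operation on A is an element of A^(A^n), i.e. an extensional function
 from ({0..<n} ->E A) to A.  Operations are tagged with their arity. *)

definition ops :: "'a set \<Rightarrow> nat \<Rightarrow> ((nat \<Rightarrow> 'a) \<Rightarrow> 'a) set" where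
  "ops A n = ({0..<n} \<rightarrow>\<^sub>E A) \<rightarrow>\<^sub>E A"

definition OA :: "'a set \<Rightarrow> (nat \<times> ((nat \<Rightarrow> 'a) \<Rightarrow> 'a)) set" where
  "OA A = {(n, f). f \<in> ops A n}"

definition proj :: "'a set \<Rightarrow> nat \<Rightarrow> nat \<Rightarrow> ((nat \<Rightarrow> 'a) \<Rightarrow> 'a)" where
  "proj A n i = (\<lambda>x\<in>{0..<n} \<rightarrow>\<^sub>E A. x i)"

definition comp_op :: "'a set \<Rightarrow> nat \<Rightarrow> ((nat \<Rightarrow> 'a) \<Rightarrow> 'a) \<Rightarrow> nat
    \<Rightarrow> (nat \<Rightarrow> (nat \<Rightarrow> 'a) \<Rightarrow> 'a) \<Rightarrow> ((nat \<Rightarrow> 'a) \<Rightarrow> 'a)" where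
  "comp_op A m f n g = (\<lambda>x\<in>{0..<n} \<rightarrow>\<^sub>E A. f (\<lambda>i\<in>{0..<m}. g i x))"

definition clone :: "'a set \<Rightarrow> (nat \<times> ((nat \<Rightarrow> 'a) \<Rightarrow> 'a)) set \<Rightarrow> bool" where
  "clone A F \<longleftrightarrow> F \<subseteq> OA A
     \<and> (\<forall>n i. i < n \<longrightarrow> (n, proj A n i) \<in> F)
     \<and> (\<forall>m f n g. (m, f) \<in> F \<and> (\<forall>i<m. (n, g i) \<in> F) \<longrightarrow> (n, comp_op A m f n g) \<in> F)"

definition arity_part :: "(nat \<times> ((nat \<Rightarrow> 'a) \<Rightarrow> 'a)) set \<Rightarrow> nat \<Rightarrow> ((nat \<Rightarrow> 'a) \<Rightarrow> 'a) set" where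
  "arity_part F n = {f. (n, f) \<in> F}"

definition apply_op :: "'q set \<Rightarrow> nat \<Rightarrow> ((nat \<Rightarrow> 'a) \<Rightarrow> 'a) \<Rightarrow> (nat \<Rightarrow> 'q \<Rightarrow> 'a) \<Rightarrow> ('q \<Rightarrow> 'a)" where
  "apply_op Q m f hs = (\<lambda>q\<in>Q. f (\<lambda>i\<in>{0..<m}. hs i q))"

definition Inv :: "'a set \<Rightarrow> 'q set \<Rightarrow> (nat \<times> ((nat \<Rightarrow> 'a) \<Rightarrow> 'a)) set \<Rightarrow> ('q \<Rightarrow> 'a) set set" where
  "Inv A Q F = {H. H \<subseteq> (Q \<rightarrow>\<^sub>E A) \<and>
     (\<forall>m f hs. (m, f) \<in> F \<and> (\<forall>i<m. hs i \<in> H) \<longrightarrow> apply_op Q m f hs \<in> H)}"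

definition restr_set :: "('q \<Rightarrow> 'a) set \<Rightarrow> 'q set \<Rightarrow> ('q \<Rightarrow> 'a) set" where
  "restr_set H P = (\<lambda>h. restrict h P) ` H"

definition ext_set :: "'a set \<Rightarrow> 'q set \<Rightarrow> ('q \<Rightarrow> 'a) set \<Rightarrow> 'q set \<Rightarrow> ('q \<Rightarrow> 'a) set" where
  "ext_set A Q H R = {f \<in> Q \<rightarrow>\<^sub>E A. restrict f R \<in> restr_set H R}"

definition decomposable :: "'a set \<Rightarrow> 'q set \<Rightarrow> ('q \<Rightarrow> 'a) set \<Rightarrow> 'q set set \<Rightarrow> bool" where
  "decomposable A Q H RR \<longleftrightarrow> H = (Q \<rightarrow>\<^sub>E A) \<inter> (\<Inter>R\<in>RR. ext_set A Q H R)"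

definition ksubsets :: "'b set \<Rightarrow> nat \<Rightarrow> 'b set set" where
  "ksubsets X k = {Y. Y \<subseteq> X \<and> finite Y \<and> card Y = k}"

definition id_pairs :: "'q set \<Rightarrow> ('q \<Rightarrow> 'a) set \<Rightarrow> 'q set set" where
  "id_pairs Q H = {P \<in> ksubsets Q 2. \<forall>p\<in>P. \<forall>q\<in>P. \<forall>h\<in>H. h p = h q}"

definition vals :: "('q \<Rightarrow> 'a) set \<Rightarrow> 'q \<Rightarrow> 'a set" where
  "vals H q = (\<lambda>h. h q) ` H"

definition QB :: "'q set \<Rightarrow> ('q \<Rightarrow> 'a) set \<Rightarrow> 'a set \<Rightarrow> 'q set" where
  "QB Q H B = {q \<in> Q. vals H q \<subseteq> B}"

definition tup2 :: "'a \<Rightarrow> 'a \<Rightarrow> nat \<Rightarrow> 'a" where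
  "tup2 x y = (\<lambda>i\<in>{0..<2::nat}. if i = 0 then x else y)"

definition Delta2 :: "'a set \<Rightarrow> (nat \<times> ((nat \<Rightarrow> 'a) \<Rightarrow> 'a)) set \<Rightarrow> bool" where
  "Delta2 A F \<longleftrightarrow>
    (\<forall>a0\<in>A. \<forall>a1\<in>A. \<forall>b0\<in>A. \<forall>b1\<in>A.
      a0 \<noteq> a1 \<and> b0 \<noteq> b1 \<and> {a0, a1} \<noteq> {b0, b1} \<longrightarrow>
      (\<forall>a\<in>{a0, a1}. \<forall>b\<in>{b0, b1}. \<exists>w\<in>arity_part F 2.
         w (tup2 a0 a1) = a \<and> w (tup2 b0 b1) = b \<and> (\<forall>x\<in>A. w (tup2 x x) = x)))"

end

theory Submission
  imports Defs
begin

definition cnd :: "'a set \<Rightarrow> 'q set \<Rightarrow> ('q \<Rightarrow> 'a) set \<Rightarrow> 'q set \<Rightarrow> ('q \<Rightarrow> 'a) \<Rightarrow> bool" where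
  "cnd A Q H S f \<longleftrightarrow> (\<forall>q\<in>S. \<exists>h\<in>H. h q = f q)
     \<and> (\<forall>p\<in>S. \<forall>q\<in>S. (\<forall>h\<in>H. h p = h q) \<longrightarrow> f p = f q)
     \<and> (\<forall>B\<in>ksubsets A 2. \<exists>h\<in>H. \<forall>x\<in>QB Q H B \<inter> S. h x = f x)"

lemma cnd_mono: "cnd A Q H S f \<Longrightarrow> S' \<subseteq> S \<Longrightarrow> cnd A Q H S' f"
  unfolding cnd_def by blast

lemma restrict_apply_op:
  "R \<subseteq> Q \<Longrightarrow> restrict (apply_op Q m f hs) R = apply_op R m f (\<lambda>i. restrict (hs i) R)"
  unfolding apply_op_def by (rule ext) (auto intro!: arg_cong[where f=f] restrict_ext)

lemma apply_op_cong:
  "(\<And>i. i < m \<Longrightarrow> hs i = hs2 i) \<Longrightarrow> apply_op P m f hs = apply_op P m f hs2"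
  unfolding apply_op_def by (auto intro!: arg_cong[where f=f] restrict_ext)

lemma restr_inv:
  assumes inv: "H \<in> Inv A Q F" and PQ: "P \<subseteq> Q"
  shows "restr_set H P \<in> Inv A P F"
proof -
  have HQ: "H \<subseteq> Q \<rightarrow>\<^sub>E A" using inv unfolding Inv_def by blast
  have "restr_set H P \<subseteq> P \<rightarrow>\<^sub>E A"
    using HQ PQ unfolding restr_set_def by (auto simp: PiE_iff) (meson PiE_mem subsetD)
  moreover have "apply_op P m f hs \<in> restr_set H P"
    if mf: "(m, f) \<in> F" and hs: "\<forall>i<m. hs i \<in> restr_set H P" for m f hs
  proof -
    have "\<forall>i. \<exists>h. i < m \<longrightarrow> h \<in> H \<and> hs i = restrict h P"
      using hs unfolding restr_set_def by blast
    from choice[OF this] obtain hs' where hs': "\<And>i. i < m \<Longrightarrow> hs' i \<in> H \<and> hs i = restrict (hs' i) P"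
      by blast
    have "apply_op Q m f hs' \<in> H" using inv mf hs' unfolding Inv_def by blast
    moreover have "restrict (apply_op Q m f hs') P = apply_op P m f (\<lambda>i. restrict (hs' i) P)"
      by (rule restrict_apply_op[OF PQ])
    moreover have "apply_op P m f (\<lambda>i. restrict (hs' i) P) = apply_op P m f hs"
      by (rule apply_op_cong) (use hs' in simp)
    ultimately show ?thesis unfolding restr_set_def by (intro image_eqI[where x="apply_op Q m f hs'"]) auto
  qed
  ultimately show ?thesis unfolding Inv_def by blast
qed

lemma three_card2:
  assumes "finite B" "card B = 2" "a \<in> B" "b \<in> B" "c \<in> B" "a \<noteq> b" "a \<noteq> c" "b \<noteq> c"
  shows False
proof -
  have "card {a,b,c} \<le> card B" using assms by (intro card_mono) auto
  then show False using assms by auto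
qed

lemma ext_agree: "f \<in> ext_set A Q H R \<Longrightarrow> \<exists>h\<in>H. \<forall>x\<in>R. h x = f x"
  unfolding ext_set_def restr_set_def
proof (clarify)
  fix h assume "h \<in> H" "restrict f R = restrict h R"
  then show "\<exists>h\<in>H. \<forall>x\<in>R. h x = f x" by (metis restrict_apply')
qed


context
  fixes A :: "'a set" and Q :: "'q set" and H :: "('q \<Rightarrow> 'a) set"
    and F :: "(nat \<times> ((nat \<Rightarrow> 'a) \<Rightarrow> 'a)) set"
  assumes HQ: "H \<subseteq> Q \<rightarrow>\<^sub>E A" and inv: "H \<in> Inv A Q F" and D: "Delta2 A F" and Hne: "H \<noteq> {}"
begin

lemma HA: "h \<in> H \<Longrightarrow> x \<in> Q \<Longrightarrow> h x \<in> A"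
  using HQ by (auto simp: PiE_iff)

lemma mix:
  assumes h1: "h1 \<in> H" and h2: "h2 \<in> H" and p: "p \<in> Q" and q: "q \<in> Q"
    and "h1 p \<noteq> h2 p" "h1 q \<noteq> h2 q" "{h1 p, h2 p} \<noteq> {h1 q, h2 q}"
    and "a \<in> {h1 p, h2 p}" "b \<in> {h1 q, h2 q}"
  shows "\<exists>h\<in>H. h p = a \<and> h q = b \<and> (\<forall>x\<in>Q. h1 x = h2 x \<longrightarrow> h x = h1 x)"
proof -
  have A4: "h1 p \<in> A" "h2 p \<in> A" "h1 q \<in> A" "h2 q \<in> A"
    using HA h1 h2 p q by auto
  have "\<exists>w\<in>arity_part F 2. w (tup2 (h1 p) (h2 p)) = a \<and> w (tup2 (h1 q) (h2 q)) = b
          \<and> (\<forall>x\<in>A. w (tup2 x x) = x)"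
    using D unfolding Delta2_def
    apply -
    apply (drule bspec[OF _ A4(1)], drule bspec[OF _ A4(2)], drule bspec[OF _ A4(3)], drule bspec[OF _ A4(4)])
    using assms(5-9) by blast
  then obtain w where w: "w \<in> arity_part F 2" "w (tup2 (h1 p) (h2 p)) = a"
    "w (tup2 (h1 q) (h2 q)) = b" "\<forall>x\<in>A. w (tup2 x x) = x" by blast
  define hs where "hs = (\<lambda>i::nat. if i = 0 then h1 else h2)"
  define h where "h = apply_op Q 2 w hs"
  have hH: "h \<in> H" using inv w(1) h1 h2 unfolding Inv_def arity_part_def h_def hs_def by auto
  have val: "h x = w (tup2 (h1 x) (h2 x))" if "x \<in> Q" for x
    using that unfolding h_def apply_op_def tup2_def hs_def
    by (auto intro!: arg_cong[where f=w] restrict_ext)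
  show ?thesis
  proof (intro bexI[OF _ hH] conjI ballI impI)
    show "h p = a" using val[OF p] w by simp
    show "h q = b" using val[OF q] w by simp
    show "h x = h1 x" if "x \<in> Q" "h1 x = h2 x" for x
      using val[OF that(1)] that w(4) HA[OF h1 that(1)] by simp
  qed
qed


lemma D2gen:
  assumes SQ: "S \<subseteq> Q" and "p \<in> S" "q \<in> S" "p \<noteq> q" "h1 \<in> H" "h2 \<in> H"
    and a1: "\<forall>x\<in>S-{p}. h1 x = f x" and a2: "\<forall>x\<in>S-{q}. h2 x = f x"
    and "h1 p \<noteq> f p" "h2 q \<noteq> f q" and fA: "\<forall>x\<in>S. f x \<in> A"
    and N: "\<not> (\<exists>h\<in>H. \<forall>x\<in>S. h x = f x)"
  shows "{h1 p, f p} = {f q, h2 q}"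
proof (rule ccontr)
  assume ne: "{h1 p, f p} \<noteq> {f q, h2 q}"
  have e1: "h2 p = f p" "h1 q = f q" using assms by auto
  have "p \<in> Q" "q \<in> Q" using assms by auto
  from mix[OF \<open>h1 \<in> H\<close> \<open>h2 \<in> H\<close> this, of "f p" "f q"]
  obtain h where h: "h \<in> H" "h p = f p" "h q = f q" "\<forall>x\<in>Q. h1 x = h2 x \<longrightarrow> h x = h1 x"
    using assms ne e1 by auto
  have "\<forall>x\<in>S. h x = f x"
  proof
    fix x assume x: "x \<in> S"
    show "h x = f x"
    proof (cases "x = p \<or> x = q")
      case True then show ?thesis using h by auto
    next
      case False then show ?thesis using h(4) a1 a2 x SQ by auto
    qed
  qed
  with N h(1) show False by blast
qed

lemma L1:
  assumes "e \<in> H" "d \<in> H" "r \<in> Q" "p \<in> Q" "d r = z" "d p = z" "e r \<noteq> e p" "z \<noteq> e r" "z \<noteq> e p"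
  shows "(\<exists>h\<in>H. h r = e r \<and> h p = z) \<and> (\<exists>h\<in>H. h r = z \<and> h p = e p)"
proof -
  have ne: "{e r, d r} \<noteq> {e p, d p}" using assms by (auto simp: doubleton_eq_iff)
  have 1: "\<exists>h\<in>H. h r = e r \<and> h p = d p"
    using mix[OF assms(1,2,3,4) _ _ ne, of "e r" "d p"] assms by auto
  have 2: "\<exists>h\<in>H. h r = d r \<and> h p = e p"
    using mix[OF assms(1,2,3,4) _ _ ne, of "d r" "e p"] assms by auto
  show ?thesis using 1 2 assms by auto
qed

lemma L2:
  assumes rQ: "r \<in> Q" and pQ: "p \<in> Q"
    and da: "da \<in> H" "da r = a" "da p = a"
    and db: "db \<in> H" "db r = b" "db p = b"
    and dc: "dc \<in> H" "dc r = c" "dc p = c"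
    and e: "e \<in> H" "e r \<noteq> e p" and abc: "a \<noteq> b" "a \<noteq> c" "b \<noteq> c"
  shows "\<exists>h\<in>H. h r = a \<and> h p = b"
proof -
  have "\<exists>e1\<in>H. e1 r = a \<and> e1 p \<noteq> a"
  proof (cases "e r = a")
    case True then show ?thesis using e by auto
  next
    case ra: False
    show ?thesis
    proof (cases "e p = a")
      case False
      then show ?thesis using L1[OF e(1) da(1) rQ pQ da(2,3) e(2)] ra by auto
    next
      case pa: True
      obtain z dz where z: "dz \<in> H" "dz r = z" "dz p = z" "z \<noteq> e r" "z \<noteq> a"
      proof (cases "e r = b")
        case True then show ?thesis using that[OF dc] abc by auto
      next
        case False then show ?thesis using that[OF db] abc by auto
      qed
      obtain h1 where h1: "h1 \<in> H" "h1 r = e r" "h1 p = z"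
        using L1[OF e(1) z(1) rQ pQ z(2,3) e(2)] z pa by auto
      have "\<exists>h\<in>H. h r = a \<and> h p = h1 p"
        using L1[OF h1(1) da(1) rQ pQ da(2,3)] h1 z ra by auto
      then show ?thesis using h1 z by auto
    qed
  qed
  then obtain e1 where e1: "e1 \<in> H" "e1 r = a" "e1 p \<noteq> a" by blast
  show ?thesis
  proof (cases "e1 p = b")
    case True then show ?thesis using e1 by auto
  next
    case False
    then show ?thesis using L1[OF e1(1) db(1) rQ pQ db(2,3)] e1 abc by auto
  qed
qed

lemma main:
  assumes "finite S" "S \<subseteq> Q" "cnd A Q H S f"
  shows "\<exists>h\<in>H. \<forall>x\<in>S. h x = f x"
  using assms
proof (induction "card S" arbitrary: S f rule: less_induct)
  case less
  have fin: "finite S" and sub: "S \<subseteq> Q" and c: "cnd A Q H S f" using less.prems by auto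
  have c1: "\<forall>q\<in>S. \<exists>h\<in>H. h q = f q"
    and c2: "\<forall>p\<in>S. \<forall>q\<in>S. (\<forall>h\<in>H. h p = h q) \<longrightarrow> f p = f q"
    and c3: "\<forall>B\<in>ksubsets A 2. \<exists>h\<in>H. \<forall>x\<in>QB Q H B \<inter> S. h x = f x"
    using c unfolding cnd_def by blast+
  have fA: "\<forall>x\<in>S. f x \<in> A"
  proof
    fix x assume x: "x \<in> S"
    then obtain h where "h \<in> H" "h x = f x" using c1 by blast
    then show "f x \<in> A" using HA[of h x] sub x by auto
  qed
  have IHf: "\<exists>h\<in>H. \<forall>x\<in>S'. h x = f' x" if "S' \<subset> S" "cnd A Q H S' f'" for S' f'
  proof -
    have "card S' < card S" using that fin by (simp add: psubset_card_mono)
    moreover have "finite S'" using that fin by (meson finite_subset psubset_imp_subset)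
    ultimately show ?thesis using less.hyps that sub by blast
  qed
  show ?case
  proof (rule ccontr)
    assume N: "\<not> (\<exists>h\<in>H. \<forall>x\<in>S. h x = f x)"
    have two: "\<exists>p\<in>S. \<exists>q\<in>S. p \<noteq> q"
    proof (rule ccontr)
      assume "\<not> ?thesis"
      then have "\<forall>p\<in>S. \<forall>q\<in>S. p = q" by blast
      show False
      proof (cases "S = {}")
        case True then show False using N Hne by blast
      next
        case False
        then obtain q where "q \<in> S" by blast
        with \<open>\<forall>p\<in>S. \<forall>q\<in>S. p = q\<close> have "S = {q}" by blast
        then show False using N c1 by auto
      qed
    qed
    have W: "\<exists>h\<in>H. \<forall>x\<in>S-{p}. h x = f x" if "p \<in> S" for p
      using IHf[of "S - {p}" f] cnd_mono[OF c] that by blast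
    have D1: "h p \<noteq> f p" if "p \<in> S" "h \<in> H" "\<forall>x\<in>S-{p}. h x = f x" for p h
    proof
      assume "h p = f p"
      then have "\<forall>x\<in>S. h x = f x" using that by auto
      then show False using N that by blast
    qed
    have D2: "{h1 p, f p} = {f q, h2 q}"
      if "p \<in> S" "q \<in> S" "p \<noteq> q" "h1 \<in> H" "h2 \<in> H"
        "\<forall>x\<in>S-{p}. h1 x = f x" "\<forall>x\<in>S-{q}. h2 x = f x" for p q h1 h2
      using D2gen[OF sub that] D1 that fA N by blast
    obtain q0 q1 where q: "q0 \<in> S" "q1 \<in> S" "q0 \<noteq> q1" using two by blast
    obtain hq0 where hq0: "hq0 \<in> H" "\<forall>x\<in>S-{q0}. hq0 x = f x" using W q by blast
    obtain hq1 where hq1: "hq1 \<in> H" "\<forall>x\<in>S-{q1}. hq1 x = f x" using W q by blast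
    define B where "B = {f q1, hq1 q1}"
    have Bset: "{hr r, f r} = B" if "r \<in> S" "hr \<in> H" "\<forall>x\<in>S-{r}. hr x = f x" for r hr
    proof (cases "r = q1")
      case True
      have "{hr r, f r} = {f q0, hq0 q0}" using D2[OF that(1) q(1) _ that(2) hq0(1) that(3) hq0(2)] True q by auto
      moreover have "{hq0 q0, f q0} = {f q1, hq1 q1}" using D2[OF q hq0(1) hq1(1) hq0(2) hq1(2)] .
      ultimately show ?thesis unfolding B_def by (simp add: insert_commute)
    next
      case False
      show ?thesis using D2[OF that(1) q(2) False that(2) hq1(1) that(3) hq1(2)] unfolding B_def .
    qed
    have BA: "B \<in> ksubsets A 2"
    proof -
      have "hq1 q1 \<noteq> f q1" using D1 q hq1 by blast
      moreover have "B \<subseteq> A" unfolding B_def using fA q hq1 HA sub by auto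
      ultimately show ?thesis unfolding ksubsets_def B_def by auto
    qed
    have "\<not> S \<subseteq> QB Q H B"
    proof
      assume "S \<subseteq> QB Q H B"
      then have "QB Q H B \<inter> S = S" by blast
      then show False using c3 BA N by metis
    qed
    then obtain r g where r: "r \<in> S" "g \<in> H" "g r \<notin> B"
      unfolding QB_def vals_def using sub by blast
    have X: "\<forall>p\<in>S-{r}. f p = hr r \<and> (\<exists>g'\<in>H. g' p = g r \<and> g' r = g r)"
      if r: "r \<in> S" "hr \<in> H" "\<forall>x\<in>S-{r}. hr x = f x" "g \<in> H" "g r \<notin> B" for r hr g
    proof
      fix p assume p: "p \<in> S - {r}"
      define cc where "cc = g r"
      define f' where "f' = f(r := cc)"
      have hrr: "hr r \<noteq> f r" using D1 r by blast
      have ccB: "cc \<notin> {hr r, f r}" using Bset[OF r(1-3)] r(5) cc_def by simp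
      have cnd': "cnd A Q H S f'"
        unfolding cnd_def
      proof (intro conjI ballI impI)
        fix q assume "q \<in> S"
        then show "\<exists>h\<in>H. h q = f' q" using c1 r(4) unfolding f'_def cc_def by auto
      next
        fix p q assume pq: "p \<in> S" "q \<in> S" "\<forall>h\<in>H. h p = h q"
        have nr: False if "p' \<in> S" "p' \<noteq> r" "\<forall>h\<in>H. h p' = h r" for p'
        proof -
          have "f p' = f r" using c2 that r(1) by blast
          moreover have "hr r = hr p'" using that r(2) by auto
          moreover have "hr p' = f p'" using r(3) that by auto
          ultimately show False using hrr by simp
        qed
        show "f' p = f' q"
        proof (cases "p = q")
          case True then show ?thesis by simp
        next
          case False
          have sym: "\<forall>h\<in>H. h q = h p" using pq(3) by auto
          have "p \<noteq> r"
          proof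
            assume "p = r"
            then show False using nr[of q] sym pq False by auto
          qed
          moreover have "q \<noteq> r"
          proof
            assume "q = r"
            then show False using nr[of p] pq False by auto
          qed
          moreover have "f p = f q" using c2 pq by blast
          ultimately show ?thesis unfolding f'_def by simp
        qed
      next
        fix B' assume B': "B' \<in> ksubsets A 2"
        obtain h where h: "h \<in> H" "\<forall>x\<in>QB Q H B' \<inter> S. h x = f x" using c3 B' by blast
        have "r \<notin> QB Q H B'"
        proof
          assume "r \<in> QB Q H B'"
          then have sub': "vals H r \<subseteq> B'" unfolding QB_def by auto
          obtain h0 where "h0 \<in> H" "h0 r = f r" using c1 r by blast
          then have "f r \<in> B'" "hr r \<in> B'" "cc \<in> B'"
            using sub' r unfolding vals_def cc_def by auto
          then show False using three_card2[of B' "f r" "hr r" cc] B' hrr ccB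
            unfolding ksubsets_def by auto
        qed
        then show "\<exists>h\<in>H. \<forall>x\<in>QB Q H B' \<inter> S. h x = f' x"
          using h unfolding f'_def by (intro bexI[OF _ h(1)]) auto
      qed
      have f'A: "\<forall>x\<in>S. f' x \<in> A" using fA HA[OF r(4)] r(1) sub unfolding f'_def cc_def by auto
      have pS: "p \<in> S" "p \<noteq> r" using p by auto
      obtain hp where hp: "hp \<in> H" "\<forall>x\<in>S-{p}. hp x = f x" using W pS by blast
      have Bp: "{hp p, f p} = {hr r, f r}" using Bset[OF pS(1) hp] Bset[OF r(1-3)] by simp
      have N': "\<not> (\<exists>h\<in>H. \<forall>x\<in>S. h x = f' x)"
      proof
        assume "\<exists>h\<in>H. \<forall>x\<in>S. h x = f' x"
        then obtain h where h: "h \<in> H" "\<forall>x\<in>S. h x = f' x" by blast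
        have "{h r, f r} = {f p, hp p}"
          using D2[OF r(1) pS(1) pS(2)[symmetric] h(1) hp(1) _ hp(2)] h(2) unfolding f'_def by auto
        moreover have "h r = cc" using h r(1) unfolding f'_def by auto
        ultimately have "cc \<in> {hp p, f p}" by auto
        then show False using Bp ccB by simp
      qed
      obtain h'p where h'p: "h'p \<in> H" "\<forall>x\<in>S-{p}. h'p x = f' x"
        using IHf[of "S - {p}" f'] cnd_mono[OF cnd'] pS by blast
      have h'pp: "h'p p \<noteq> f' p"
      proof
        assume "h'p p = f' p"
        then have "\<forall>x\<in>S. h'p x = f' x" using h'p by auto
        then show False using N' h'p by blast
      qed
      have hrf': "\<forall>x\<in>S-{r}. hr x = f' x" using r(3) unfolding f'_def by auto
      have hrr': "hr r \<noteq> f' r" using ccB unfolding f'_def by auto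
      have "{h'p p, f' p} = {f' r, hr r}"
        by (rule D2gen[OF sub pS(1) r(1) pS(2) h'p(1) r(2) h'p(2) hrf' h'pp hrr' f'A N'])
      then have E: "{h'p p, f p} = {cc, hr r}" using pS unfolding f'_def by simp
      have "f p \<noteq> cc" using Bp ccB by auto
      then have fp: "f p = hr r" using E by (auto simp: doubleton_eq_iff)
      then have "h'p p = cc" using E h'pp pS unfolding f'_def by (auto simp: doubleton_eq_iff)
      moreover have "h'p r = cc" using h'p r(1) pS unfolding f'_def by auto
      ultimately show "f p = hr r \<and> (\<exists>g'\<in>H. g' p = g r \<and> g' r = g r)"
        using fp h'p(1) cc_def by auto
    qed
    obtain hr where hr: "hr \<in> H" "\<forall>x\<in>S-{r}. hr x = f x" using W r by blast
    obtain p where p: "p \<in> S" "p \<noteq> r" using two by blast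
    have Xr: "f p = hr r" "\<exists>g'\<in>H. g' p = g r \<and> g' r = g r"
      using X[OF r(1) hr r(2,3)] p by auto
    then obtain g' where g': "g' \<in> H" "g' p = g r" "g' r = g r" by blast
    obtain hp where hp: "hp \<in> H" "\<forall>x\<in>S-{p}. hp x = f x" using W p by blast
    have Xp: "\<forall>s\<in>S-{p}. f s = hp p" using X[OF p(1) hp g'(1)] g'(2) r(3) by auto
    have frp: "f r = hp p" using Xp r p by auto
    have hpp: "hp p \<noteq> f p" using D1 p hp by blast
    have Bp: "{hp p, f p} = B" using Bset[OF p(1) hp] .
    show False
    proof (cases "\<exists>s\<in>S. s \<noteq> r \<and> s \<noteq> p")
      case True
      then obtain s where s: "s \<in> S" "s \<noteq> r" "s \<noteq> p" by blast
      have "f s = hr r" using X[OF r(1) hr r(2,3)] s by auto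
      moreover have "f s = hp p" using Xp s by auto
      ultimately show False using Xr(1) frp hpp by simp
    next
      case False
      then have Seq: "S = {r, p}" using r(1) p(1) by auto
      have "f r \<noteq> f p" using frp hpp by simp
      then obtain e where e: "e \<in> H" "e r \<noteq> e p" using c2 r(1) p(1) by blast
      have "hr p = f p" using hr p by auto
      have "hp r = f r" using hp r p by auto
      have "g r \<noteq> f r" "g r \<noteq> f p" using r(3) Bp frp by auto
      have "\<exists>h\<in>H. h r = f r \<and> h p = f p"
        using L2[OF _ _ hp(1) \<open>hp r = f r\<close> frp[symmetric] hr(1) Xr(1)[symmetric] \<open>hr p = f p\<close>
            g'(1) g'(3) g'(2) e \<open>f r \<noteq> f p\<close>] sub r(1) p(1)
          \<open>g r \<noteq> f r\<close> \<open>g r \<noteq> f p\<close> by auto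
      then show False using N Seq by auto
    qed
  qed
qed

end

lemma fam_sub: "P \<in> ksubsets Q 1 \<union> {QB Q H B | B. B \<in> ksubsets A 2} \<Longrightarrow> P \<subseteq> Q"
  unfolding ksubsets_def QB_def by auto

theorem theorem3:
  fixes A :: "'a set" and Q :: "'q set" and H :: "('q \<Rightarrow> 'a) set"
    and F :: "(nat \<times> ((nat \<Rightarrow> 'a) \<Rightarrow> 'a)) set"
  assumes "finite A" "A \<noteq> {}" "finite Q" "Q \<noteq> {}"
    and "finite H" "H \<noteq> {}" "H \<subseteq> (Q \<rightarrow>\<^sub>E A)"
    and "clone A F" "Delta2 A F"
  shows "H \<in> Inv A Q F \<longleftrightarrow>
    ((\<forall>P \<in> ksubsets Q 1 \<union> {QB Q H B | B. B \<in> ksubsets A 2}.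
        restr_set H P \<in> Inv A P F)
     \<and> decomposable A Q H (ksubsets Q 1 \<union> id_pairs Q H \<union> {QB Q H B | B. B \<in> ksubsets A 2}))"
  (is "_ \<longleftrightarrow> ?one \<and> decomposable A Q H ?RR")
proof
  assume inv: "H \<in> Inv A Q F"
  have one: ?one
  proof
    fix P assume "P \<in> ksubsets Q 1 \<union> {QB Q H B | B. B \<in> ksubsets A 2}"
    then show "restr_set H P \<in> Inv A P F" by (rule restr_inv[OF inv fam_sub])
  qed
  have "H = (Q \<rightarrow>\<^sub>E A) \<inter> (\<Inter>R\<in>?RR. ext_set A Q H R)"
  proof (rule equalityI)
    show "H \<subseteq> (Q \<rightarrow>\<^sub>E A) \<inter> (\<Inter>R\<in>?RR. ext_set A Q H R)"
    proof
      fix h assume h: "h \<in> H"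
      then have hQ: "h \<in> Q \<rightarrow>\<^sub>E A" using assms(7) by blast
      have ex: "h \<in> ext_set A Q H R" for R
        unfolding ext_set_def restr_set_def using hQ h by blast
      show "h \<in> (Q \<rightarrow>\<^sub>E A) \<inter> (\<Inter>R\<in>?RR. ext_set A Q H R)" by (intro IntI INT_I hQ ex)
    qed
  next
    show "(Q \<rightarrow>\<^sub>E A) \<inter> (\<Inter>R\<in>?RR. ext_set A Q H R) \<subseteq> H"
    proof
      fix f assume f: "f \<in> (Q \<rightarrow>\<^sub>E A) \<inter> (\<Inter>R\<in>?RR. ext_set A Q H R)"
      have fe: "\<exists>h\<in>H. \<forall>x\<in>R. h x = f x" if "R \<in> ?RR" for R
      proof -
        have "f \<in> ext_set A Q H R" using f that by blast
        then show ?thesis by (rule ext_agree)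
      qed
      have "cnd A Q H Q f"
        unfolding cnd_def
      proof (intro conjI ballI impI)
        fix q assume q: "q \<in> Q"
        have "{q} \<in> ksubsets Q 1" using q unfolding ksubsets_def by auto
        then have "{q} \<in> ?RR" by (rule UnI1[OF UnI1])
        from fe[OF this] show "\<exists>h\<in>H. h q = f q" by blast
      next
        fix p q assume pq: "p \<in> Q" "q \<in> Q" "\<forall>h\<in>H. h p = h q"
        show "f p = f q"
        proof (cases "p = q")
          case True then show ?thesis by simp
        next
          case False
          have "{p, q} \<in> id_pairs Q H"
            unfolding id_pairs_def ksubsets_def using pq False by auto
          then have "{p, q} \<in> ?RR" by (rule UnI1[OF UnI2])
          from fe[OF this] obtain h where "h \<in> H" "\<forall>x\<in>{p,q}. h x = f x" by blast
          then show ?thesis using pq by force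
        qed
      next
        fix B assume "B \<in> ksubsets A 2"
        then have "QB Q H B \<in> {QB Q H B | B. B \<in> ksubsets A 2}" by blast
        then have "QB Q H B \<in> ?RR" by (rule UnI2)
        from fe[OF this] show "\<exists>h\<in>H. \<forall>x\<in>QB Q H B \<inter> Q. h x = f x" by blast
      qed
      then obtain h where h: "h \<in> H" "\<forall>x\<in>Q. h x = f x"
        using main[OF assms(7) inv assms(9) assms(6) assms(3)] by blast
      have "f = h" using f h assms(7) by (intro PiE_ext[of f Q "\<lambda>_. A" h]) auto
      then show "f \<in> H" using h by simp
    qed
  qed
  then show "?one \<and> decomposable A Q H ?RR" using one unfolding decomposable_def by blast
next
  assume R: "?one \<and> decomposable A Q H ?RR"
  then have one: ?one and Heq: "H = (Q \<rightarrow>\<^sub>E A) \<inter> (\<Inter>R\<in>?RR. ext_set A Q H R)"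
    unfolding decomposable_def by blast+
  have FO: "F \<subseteq> OA A" using assms(8) unfolding clone_def by blast
  have "apply_op Q m f hs \<in> H" if mf: "(m, f) \<in> F" and hs: "\<forall>i<m. hs i \<in> H" for m f hs
  proof -
    define g where "g = apply_op Q m f hs"
    have fops: "f \<in> ops A m" using FO mf unfolding OA_def by auto
    have gQ: "g \<in> Q \<rightarrow>\<^sub>E A"
      unfolding g_def apply_op_def
    proof (rule restrict_PiE_iff[THEN iffD2], intro ballI)
      fix q assume q: "q \<in> Q"
      have "(\<lambda>i\<in>{0..<m}. hs i q) \<in> {0..<m} \<rightarrow>\<^sub>E A"
        using hs q assms(7) by (auto simp: PiE_iff) (meson PiE_mem subsetD)
      then show "f (\<lambda>i\<in>{0..<m}. hs i q) \<in> A" using fops unfolding ops_def by (rule PiE_mem[rotated]) 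
    qed
    have gR: "restrict g R \<in> restr_set H R"
      if "R \<in> ksubsets Q 1 \<union> {QB Q H B | B. B \<in> ksubsets A 2}" for R
    proof -
      have RQ: "R \<subseteq> Q" using fam_sub that by blast
      have I: "restr_set H R \<in> Inv A R F" using one that by blast
      have hsR: "\<forall>i<m. restrict (hs i) R \<in> restr_set H R" using hs unfolding restr_set_def by blast
      have Icl: "\<And>m f hs. (m, f) \<in> F \<Longrightarrow> \<forall>i<m. hs i \<in> restr_set H R
          \<Longrightarrow> apply_op R m f hs \<in> restr_set H R"
        using I unfolding Inv_def by blast
      have "apply_op R m f (\<lambda>i. restrict (hs i) R) \<in> restr_set H R"
        by (rule Icl[OF mf hsR])
      then show ?thesis unfolding g_def restrict_apply_op[OF RQ] .
    qed
    have "g \<in> ext_set A Q H R" if RR: "R \<in> ?RR" for R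
    proof (cases "R \<in> id_pairs Q H")
      case False
      then have "R \<in> ksubsets Q 1 \<union> {QB Q H B | B. B \<in> ksubsets A 2}" using RR by blast
      from gR[OF this] show ?thesis using gQ unfolding ext_set_def by blast
    next
      case True
      then obtain p q where pq: "R = {p, q}" "p \<in> Q" "q \<in> Q" "\<forall>h\<in>H. h p = h q"
        unfolding id_pairs_def ksubsets_def by (auto simp: card_2_iff)
      have "{p} \<in> ksubsets Q 1" using pq unfolding ksubsets_def by auto
      then have "restrict g {p} \<in> restr_set H {p}" using gR by blast
      then obtain h where h: "h \<in> H" "restrict g {p} = restrict h {p}"
        unfolding restr_set_def by blast
      have hp: "h p = g p" using fun_cong[OF h(2), of p] by simp
      have gpq: "g p = g q"
        unfolding g_def apply_op_def using pq hs by (auto intro!: arg_cong[where f=f] restrict_ext)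
      have "restrict g R = restrict h R"
        unfolding pq(1) using hp gpq pq(4) h(1) by (auto simp: fun_eq_iff)
      then have "restrict g R \<in> restr_set H R" using h(1) unfolding restr_set_def by auto
      then show ?thesis using gQ unfolding ext_set_def by blast
    qed
    then have "g \<in> (Q \<rightarrow>\<^sub>E A) \<inter> (\<Inter>R\<in>?RR. ext_set A Q H R)" using gQ by blast
    then show ?thesis unfolding g_def by (subst Heq)
  qed
  then show "H \<in> Inv A Q F" using assms(7) unfolding Inv_def by blast
qed

end
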